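(* For every $\phi\in L^1(\mathbb{R}_+)$, $f\in L^\infty(\mathbb{R}_+)$ and $\omega\in\Omega^*$, \[\omega\text{-}\lim_x\int_0^x f(t)\phi(x-t)\,dt = \int_0^\infty f_\omega(-t)\phi(t)\,dt.\]
   Context: $\mathbb{R}_+=[0,\infty)$; functions are complex-valued. Let $\beta\mathbb{N}$ be the Stone–Čech compactification of $\mathbb{N}$, $\mathbb{N}^*=\beta\mathbb{N}\setminus\mathbb{N}$, $\tau$ the continuous extension of $n\mapsto n+1$. $\Omega$ is the quotient of $\beta\mathbb{N}\times[0,1]$ identifying $(\eta,1)$ with $(\tau\eta,0)$; $\Omega^*$ consists of classes $(\eta,u)$ with $\eta\in\mathbb{N}^*$; $\tau^s(\eta,u)=(\tau^{[u+s]}\eta,u+s-[u+s])$. Each $\omega=(\eta,u)$ is identified with the ultrafilter on $\mathbb{R}_+$ generated by $\{u+A:A\in\eta\}$, and $\omega\text{-}\lim_x g(x)$ is the limit of a bounded function $g$ along this ultrafilter. For $f\in L^\infty(\mathbb{R}_+)$, $f_\omega := \omega\text{-}\lim_s f(\cdot+s)$ in the weak* topology of $L^\infty(\mathbb{R}_+)$, extended to $L^\infty(\mathbb{R})$ by $f_\omega(x) = f_{\tau^{-N}\omega}(N+x)$ for $x\in[-N,0]$, $N>0$. *)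

theory Defs
  imports "HOL-Analysis.Analysis"
begin

text \<open>Points of the Stone-Cech compactification of the naturals are ultrafilters on nat;
  N* consists of the free (non-principal) ones.\<close>

definition nat_ultrafilter :: "nat filter \<Rightarrow> bool" where
  "nat_ultrafilter F \<longleftrightarrow> F \<noteq> bot \<and> (\<forall>P. eventually P F \<or> eventually (\<lambda>n. \<not> P n) F)"

definition in_Nstar :: "nat filter \<Rightarrow> bool" where
  "in_Nstar \<eta> \<longleftrightarrow> nat_ultrafilter \<eta> \<and> (\<forall>n. \<eta> \<noteq> principal {n})"

text \<open>A point of Omega is represented by its canonical representative (eta, u) with 0 <= u < 1
  (the class of (eta,1) is represented by (tau eta, 0)).\<close>

type_synonym omega = "nat filter \<times> real"

definition Omega_star :: "omega set" where
  "Omega_star = {(\<eta>, u). in_Nstar \<eta> \<and> 0 \<le> u \<and> u < 1}"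

text \<open>Integer powers of tau on N*: the continuous extension of n |-> n + k (for k < 0 this is the
  inverse of tau^(-k) on N*, since free ultrafilters contain all cofinite sets).\<close>

definition tau_pow :: "int \<Rightarrow> nat filter \<Rightarrow> nat filter" where
  "tau_pow k \<eta> = filtermap (\<lambda>n. nat (int n + k)) \<eta>"

definition tau :: "real \<Rightarrow> omega \<Rightarrow> omega" where
  "tau s \<omega> = (tau_pow \<lfloor>snd \<omega> + s\<rfloor> (fst \<omega>), snd \<omega> + s - of_int \<lfloor>snd \<omega> + s\<rfloor>)"

definition omega_filter :: "omega \<Rightarrow> real filter" where
  "omega_filter \<omega> = filtermap (\<lambda>n. snd \<omega> + real n) (fst \<omega>)"

definition omega_lim :: "omega \<Rightarrow> (real \<Rightarrow> 'a::t2_space) \<Rightarrow> 'a" where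
  "omega_lim \<omega> g = Lim (omega_filter \<omega>) g"

definition L1_plus :: "(real \<Rightarrow> complex) \<Rightarrow> bool" where
  "L1_plus \<phi> \<longleftrightarrow> set_integrable lborel {0..} \<phi>"

definition Linf_plus :: "(real \<Rightarrow> complex) \<Rightarrow> bool" where
  "Linf_plus f \<longleftrightarrow> set_borel_measurable lborel {0..} f \<and>
     (\<exists>C. AE t in lborel. t \<in> {0..} \<longrightarrow> norm (f t) \<le> C)"

definition Linf_real :: "(real \<Rightarrow> complex) \<Rightarrow> bool" where
  "Linf_real g \<longleftrightarrow> g \<in> borel_measurable lborel \<and> (\<exists>C. AE t in lborel. norm (g t) \<le> C)"

text \<open>h represents f_omega in L^inf(R+): the weak* limit of f(. + s) along omega.\<close>

definition is_f_omega_plus :: "(real \<Rightarrow> complex) \<Rightarrow> omega \<Rightarrow> (real \<Rightarrow> complex) \<Rightarrow> bool" where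
  "is_f_omega_plus f \<omega> h \<longleftrightarrow> Linf_plus h \<and>
     (\<forall>\<phi>. L1_plus \<phi> \<longrightarrow>
        ((\<lambda>s. LINT t:{0..}|lborel. f (t + s) * \<phi> t) \<longlongrightarrow> (LINT t:{0..}|lborel. h t * \<phi> t))
          (omega_filter \<omega>))"

text \<open>g represents f_omega in L^inf(R), extended by f_omega(x) = f_(tau^(-N) omega)(N + x)
  for x in [-N, 0].\<close>

definition is_f_omega :: "(real \<Rightarrow> complex) \<Rightarrow> omega \<Rightarrow> (real \<Rightarrow> complex) \<Rightarrow> bool" where
  "is_f_omega f \<omega> g \<longleftrightarrow> Linf_real g \<and> is_f_omega_plus f \<omega> g \<and>
     (\<forall>N>0. \<exists>h. is_f_omega_plus f (tau (- N) \<omega>) h \<and>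
        (AE x in lborel. x \<in> {- N..0} \<longrightarrow> g x = h (N + x)))"

end

theory Submission
  imports Defs
begin

lemma Nstar_ev_ge:
  assumes "in_Nstar \<eta>" shows "eventually (\<lambda>n. m \<le> n) \<eta>"
proof (induction m)
  case 0 show ?case by simp
next
  case (Suc m)
  have nb: "\<eta> \<noteq> bot" and uf: "\<forall>P. eventually P \<eta> \<or> eventually (\<lambda>n. \<not> P n) \<eta>"
    and np: "\<eta> \<noteq> principal {m}"
    using assms unfolding in_Nstar_def nat_ultrafilter_def by auto
  have ne: "eventually (\<lambda>n. n \<noteq> m) \<eta>"
  proof (rule ccontr)
    assume a: "\<not> eventually (\<lambda>n. n \<noteq> m) \<eta>"
    from uf have "eventually (\<lambda>n. n = m) \<eta> \<or> eventually (\<lambda>n. \<not> n = m) \<eta>" by (rule allE)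
    with a have e: "eventually (\<lambda>n. n = m) \<eta>" by simp
    have "\<eta> = principal {m}"
    proof (rule filter_eqI)
      fix P
      show "eventually P \<eta> = eventually P (principal {m})"
      proof
        assume p: "eventually P \<eta>"
        have "P m"
        proof (rule ccontr)
          assume "\<not> P m"
          have "eventually (\<lambda>n. False) \<eta>" using p e
            by eventually_elim (use \<open>\<not> P m\<close> in simp)
          with nb show False by (simp add: eventually_False)
        qed
        then show "eventually P (principal {m})" by (simp add: eventually_principal)
      next
        assume "eventually P (principal {m})"
        then have "P m" by (simp add: eventually_principal)
        then show "eventually P \<eta>" using e by (auto elim: eventually_mono)
      qed
    qed
    with np show False by simp
  qed
  show ?case using Suc ne by eventually_elim auto
qed

lemma Omega_star_notbot:
  assumes "\<omega> \<in> Omega_star" shows "omega_filter \<omega> \<noteq> bot"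
proof -
  obtain \<eta> u where w: "\<omega> = (\<eta>, u)" "in_Nstar \<eta>" using assms unfolding Omega_star_def by auto
  have "\<eta> \<noteq> bot" using w(2) unfolding in_Nstar_def nat_ultrafilter_def by (rule conjunct1[OF conjunct1])
  then show ?thesis unfolding omega_filter_def w by (simp add: filtermap_bot_iff)
qed

lemma Omega_star_ev_ge:
  assumes "\<omega> \<in> Omega_star" shows "eventually (\<lambda>x. B \<le> x) (omega_filter \<omega>)"
proof -
  obtain \<eta> u where w: "\<omega> = (\<eta>, u)" "in_Nstar \<eta>" "0 \<le> u" using assms unfolding Omega_star_def by auto
  have "eventually (\<lambda>n. nat \<lceil>B\<rceil> \<le> n) \<eta>" by (rule Nstar_ev_ge[OF w(2)])
  then have "eventually (\<lambda>n. B \<le> u + real n) \<eta>"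
  proof eventually_elim
    case (elim n)
    have "B \<le> real (nat \<lceil>B\<rceil>)" by (rule real_nat_ceiling_ge)
    also have "\<dots> \<le> real n" using elim by simp
    finally show ?case using w(3) by simp
  qed
  then show ?thesis unfolding omega_filter_def w by (simp add: eventually_filtermap)
qed

lemma Omega_star_shift:
  assumes "\<omega> \<in> Omega_star"
  shows "filterlim (\<lambda>x. x - M) (omega_filter (tau (- M) \<omega>)) (omega_filter \<omega>)"
proof -
  obtain \<eta> u where w: "\<omega> = (\<eta>, u)" "in_Nstar \<eta>" "0 \<le> u" using assms unfolding Omega_star_def by auto
  define k where "k = \<lfloor>u + - M\<rfloor>"
  have ev: "eventually (\<lambda>n. nat (- k) \<le> n) \<eta>" by (rule Nstar_ev_ge[OF w(2)])
  have eq: "eventually (\<lambda>n. u + real n - M = u + - M - real_of_int k + real (nat (int n + k))) \<eta>"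
    using ev
  proof (rule eventually_mono)
    fix n :: nat assume n: "nat (- k) \<le> n"
    have "- k \<le> int (nat (- k))" by simp
    moreover have "int (nat (- k)) \<le> int n" by (rule of_nat_mono[OF n])
    ultimately have "0 \<le> int n + k" by linarith
    then have "real (nat (int n + k)) = real n + real_of_int k" by (simp add: of_nat_nat)
    then show "u + real n - M = u + - M - real_of_int k + real (nat (int n + k))" by simp
  qed
  have 1: "filtermap (\<lambda>n. u + real n - M) \<eta> = filtermap (\<lambda>n. u + - M - real_of_int k + real (nat (int n + k))) \<eta>"
    unfolding filter_eq_iff eventually_filtermap
  proof (intro allI iffI)
    fix P assume "eventually (\<lambda>n. P (u + real n - M)) \<eta>"
    then show "eventually (\<lambda>n. P (u + - M - real_of_int k + real (nat (int n + k)))) \<eta>"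
      using eq by eventually_elim metis
  next
    fix P assume "eventually (\<lambda>n. P (u + - M - real_of_int k + real (nat (int n + k)))) \<eta>"
    then show "eventually (\<lambda>n. P (u + real n - M)) \<eta>"
      using eq by eventually_elim metis
  qed
  have 2: "omega_filter (tau (- M) \<omega>) = filtermap (\<lambda>n. u + - M - real_of_int k + real (nat (int n + k))) \<eta>"
    unfolding omega_filter_def tau_def tau_pow_def w k_def
    by (simp add: filtermap_filtermap)
  have "filterlim (\<lambda>n. u + real n - M) (omega_filter (tau (- M) \<omega>)) \<eta>"
    unfolding filterlim_def 1 2 by simp
  then show ?thesis unfolding w omega_filter_def filterlim_filtermap by simp
qed

lemma bdd_version:
  fixes F :: "real \<Rightarrow> complex"
  assumes Fm: "F \<in> borel_measurable borel" and Fb: "AE t in lborel. norm (F t) \<le> C"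
  shows "\<exists>F1 C'. F1 \<in> borel_measurable borel \<and> (\<forall>t. norm (F1 t) \<le> C') \<and> 0 \<le> C' \<and>
           (\<forall>a c. c \<noteq> 0 \<longrightarrow> (AE t in lborel. F (a + c * t) = F1 (a + c * t)))"
proof (intro exI conjI allI impI)
  define F1 where "F1 = (\<lambda>t. if norm (F t) \<le> C then F t else 0)"
  show m: "F1 \<in> borel_measurable borel" unfolding F1_def using Fm by measurable
  show "norm (F1 t) \<le> max C 0" for t unfolding F1_def by auto
  show "0 \<le> max C 0" by simp
  fix a c :: real assume c: "c \<noteq> 0"
  have "AE t in lborel. F t = F1 t" using Fb by eventually_elim (simp add: F1_def)
  moreover have "Measurable.pred borel (\<lambda>t. F t = F1 t)" using Fm m by measurable
  ultimately show "AE t in lborel. F (a + c * t) = F1 (a + c * t)"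
    using AE_borel_affine[OF c, of "\<lambda>t. F t = F1 t" a] by simp
qed

definition tl :: "(real \<Rightarrow> complex) \<Rightarrow> real \<Rightarrow> real" where
  "tl \<phi> M = (\<integral>s. indicator {M<..} s * norm (\<phi> s) \<partial>lborel)"

lemma tl_nonneg: "0 \<le> tl \<phi> M"
  unfolding tl_def by (intro integral_nonneg_AE) auto

lemma tl_small:
  assumes "integrable lborel \<phi>" "0 < d"
  shows "\<exists>M>0. tl \<phi> M < d"
proof -
  have m: "\<phi> \<in> borel_measurable borel" using borel_measurable_integrable[OF assms(1)] by simp
  have 1: "(\<lambda>s. indicator {M<..} s * norm (\<phi> s)) \<in> borel_measurable lborel" for M :: real
      using m by measurable
  have 2: "integrable lborel (\<lambda>s. norm (\<phi> s))" using assms(1) by simp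
  have 3: "AE s in lborel. ((\<lambda>M. indicator {M<..} s * norm (\<phi> s)) \<longlongrightarrow> (0::real)) at_top"
    proof (intro AE_I2 tendsto_eventually)
      fix s :: real
      show "\<forall>\<^sub>F M in at_top. indicator {M<..} s * norm (\<phi> s) = 0"
        using eventually_ge_at_top[of s] by eventually_elim auto
    qed
  have 4: "\<forall>\<^sub>F M in at_top. AE s in lborel. norm (indicator {M<..} s * norm (\<phi> s)) \<le> norm (\<phi> s)"
      by (intro always_eventually allI AE_I2) (auto simp: indicator_def)
  have "(tl \<phi> \<longlongrightarrow> 0) at_top"
    using integral_dominated_convergence_at_top[OF _ 1 2 3 4] unfolding tl_def[abs_def] by simp
  then have "eventually (\<lambda>M. tl \<phi> M < d) at_top" using assms(2) by (rule order_tendstoD)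
  then have "eventually (\<lambda>M. tl \<phi> M < d \<and> 0 < M) at_top"
    using eventually_gt_at_top[of 0] by eventually_elim auto
  then obtain M where "tl \<phi> M < d \<and> 0 < M" using eventually_happens'[OF trivial_limit_at_top_linorder] by blast
  then show ?thesis by blast
qed

lemma tail_bound:
  fixes K \<phi> :: "real \<Rightarrow> complex"
  assumes Km: "K \<in> borel_measurable borel" and Kb: "\<And>s. norm (K s) \<le> C"
    and \<phi>: "integrable lborel \<phi>"
  shows "norm ((\<integral>s. K s * \<phi> s \<partial>lborel) - (\<integral>s. indicator {..M} s *\<^sub>R (K s * \<phi> s) \<partial>lborel)) \<le> C * tl \<phi> M"
proof -
  have m: "\<phi> \<in> borel_measurable borel" using borel_measurable_integrable[OF \<phi>] by simp
  have C0: "0 \<le> C" using Kb[of 0] norm_ge_zero order_trans by blast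
  have i1: "integrable lborel (\<lambda>s. K s * \<phi> s)"
  proof (rule Bochner_Integration.integrable_bound[where f="\<lambda>s. C *\<^sub>R \<phi> s"])
    show "integrable lborel (\<lambda>s. C *\<^sub>R \<phi> s)" using \<phi> by simp
    show "(\<lambda>s. K s * \<phi> s) \<in> borel_measurable lborel" using Km m by measurable
    show "AE s in lborel. norm (K s * \<phi> s) \<le> norm (C *\<^sub>R \<phi> s)"
      using C0 Kb by (intro AE_I2) (simp add: norm_mult mult_right_mono)
  qed
  have i2: "integrable lborel (\<lambda>s. indicator {..M} s *\<^sub>R (K s * \<phi> s))"
    using i1 by (intro integrable_mult_indicator) auto
  have "(\<integral>s. K s * \<phi> s \<partial>lborel) - (\<integral>s. indicator {..M} s *\<^sub>R (K s * \<phi> s) \<partial>lborel)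
      = (\<integral>s. K s * \<phi> s - indicator {..M} s *\<^sub>R (K s * \<phi> s) \<partial>lborel)"
    using i1 i2 by simp
  also have "norm \<dots> \<le> (\<integral>s. C * (indicator {M<..} s * norm (\<phi> s)) \<partial>lborel)"
  proof (rule Bochner_Integration.integral_norm_bound_integral)
    show "integrable lborel (\<lambda>s. K s * \<phi> s - indicator {..M} s *\<^sub>R (K s * \<phi> s))" using i1 i2 by simp
    show "integrable lborel (\<lambda>s. C * (indicator {M<..} s * norm (\<phi> s)))"
      using integrable_mult_indicator[of "{M<..}" lborel "\<lambda>x. norm (\<phi> x)"] \<phi> by (intro integrable_mult_right) simp
    fix s
    show "norm (K s * \<phi> s - indicator {..M} s *\<^sub>R (K s * \<phi> s)) \<le> C * (indicator {M<..} s * norm (\<phi> s))"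
      using Kb[of s] by (auto simp: indicator_def norm_mult mult_right_mono)
  qed
  also have "\<dots> = C * tl \<phi> M" unfolding tl_def by simp
  finally show ?thesis .
qed

theorem lemma3p2:
  fixes \<phi> f g :: "real \<Rightarrow> complex" and \<omega> :: omega
  assumes "L1_plus \<phi>" and "Linf_plus f" and "\<omega> \<in> Omega_star"
    and "is_f_omega f \<omega> g"
  shows "omega_lim \<omega> (\<lambda>x. LINT t:{0..x}|lborel. f t * \<phi> (x - t))
           = (LINT t:{0..}|lborel. g (- t) * \<phi> t)"
proof -
  define F where "F = omega_filter \<omega>"
  define \<phi>0 where "\<phi>0 = (\<lambda>t. indicator {0..} t *\<^sub>R \<phi> t)"
  have \<phi>i: "integrable lborel \<phi>0" using assms(1) unfolding L1_plus_def set_integrable_def \<phi>0_def .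
  have \<phi>m[measurable]: "\<phi>0 \<in> borel_measurable borel" using borel_measurable_integrable[OF \<phi>i] by simp
  define f0 where "f0 = (\<lambda>t. indicator {0..} t *\<^sub>R f t)"
  have f0m[measurable]: "f0 \<in> borel_measurable borel"
    using assms(2) unfolding Linf_plus_def set_borel_measurable_def f0_def by simp
  from conjunct2[OF assms(2)[unfolded Linf_plus_def]]
  obtain Cf' where "AE t in lborel. t \<in> {0..} \<longrightarrow> norm (f t) \<le> Cf'" ..
  then have "AE t in lborel. norm (f0 t) \<le> max Cf' 0"
    by eventually_elim (auto simp: f0_def indicator_def)
  from bdd_version[OF f0m this] obtain f1 Cf where f1m[measurable]: "f1 \<in> borel_measurable borel"
    and f1b: "\<forall>t. norm (f1 t) \<le> Cf" and Cf0: "0 \<le> Cf"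
    and f1ae: "\<forall>a c. c \<noteq> 0 \<longrightarrow> (AE t in lborel. f0 (a + c * t) = f1 (a + c * t))" by blast
  note gdef = assms(4)[unfolded is_f_omega_def]
  have gL: "Linf_real g" using gdef by (rule conjunct1)
  have gE: "\<forall>N>0. \<exists>h. is_f_omega_plus f (tau (- N) \<omega>) h \<and>
        (AE x in lborel. x \<in> {- N..0} \<longrightarrow> g x = h (N + x))"
    using gdef by (rule conjunct2[THEN conjunct2])
  have gm[measurable]: "g \<in> borel_measurable borel" using gL unfolding Linf_real_def by simp
  from conjunct2[OF gL[unfolded Linf_real_def]]
  obtain Cg' where "AE t in lborel. norm (g t) \<le> Cg'" ..
  from bdd_version[OF gm this] obtain g1 Cg where g1m[measurable]: "g1 \<in> borel_measurable borel"
    and g1b: "\<forall>t. norm (g1 t) \<le> Cg" and Cg0: "0 \<le> Cg"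
    and g1ae: "\<forall>a c. c \<noteq> 0 \<longrightarrow> (AE t in lborel. g (a + c * t) = g1 (a + c * t))" by blast

  define Conv where "Conv = (\<lambda>x. \<integral>s. f1 (x - s) * \<phi>0 s \<partial>lborel)"
  have A: "(LINT t:{0..x}|lborel. f t * \<phi> (x - t)) = Conv x" for x
  proof -
    have "(LINT t:{0..x}|lborel. f t * \<phi> (x - t)) = (\<integral>t. f0 t * \<phi>0 (x - t) \<partial>lborel)"
      unfolding set_lebesgue_integral_def f0_def \<phi>0_def
      by (intro Bochner_Integration.integral_cong[OF refl]) (auto simp: indicator_def)
    also have "\<dots> = (\<integral>t. f1 t * \<phi>0 (x - t) \<partial>lborel)"
    proof (rule integral_cong_AE)
      show "(\<lambda>t. f0 t * \<phi>0 (x - t)) \<in> borel_measurable lborel" by measurable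
      show "(\<lambda>t. f1 t * \<phi>0 (x - t)) \<in> borel_measurable lborel" by measurable
      show "AE t in lborel. f0 t * \<phi>0 (x - t) = f1 t * \<phi>0 (x - t)"
      proof -
        have "AE t in lborel. f0 (0 + 1 * t) = f1 (0 + 1 * t)" using f1ae[rule_format, where a=0 and c=1] by simp
        then show ?thesis by eventually_elim simp
      qed
    qed
    also have "\<dots> = (\<integral>s. f1 (x - s) * \<phi>0 s \<partial>lborel)"
      using lborel_integral_real_affine[where c="-1" and t=x and f="\<lambda>t. f1 t * \<phi>0 (x - t)"] by simp
    finally show ?thesis unfolding Conv_def .
  qed

  define Bv where "Bv = (\<integral>s. g1 (- s) * \<phi>0 s \<partial>lborel)"
  have B: "(LINT t:{0..}|lborel. g (- t) * \<phi> t) = Bv"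
  proof -
    have "(LINT t:{0..}|lborel. g (- t) * \<phi> t) = (\<integral>t. g (- t) * \<phi>0 t \<partial>lborel)"
      unfolding set_lebesgue_integral_def \<phi>0_def
      by (intro Bochner_Integration.integral_cong[OF refl]) (auto simp: indicator_def)
    also have "\<dots> = Bv" unfolding Bv_def
    proof (rule integral_cong_AE)
      show "(\<lambda>t. g (- t) * \<phi>0 t) \<in> borel_measurable lborel" by measurable
      show "(\<lambda>t. g1 (- t) * \<phi>0 t) \<in> borel_measurable lborel" by measurable
      show "AE t in lborel. g (- t) * \<phi>0 t = g1 (- t) * \<phi>0 t"
      proof -
        have "AE t in lborel. g (0 + -1 * t) = g1 (0 + -1 * t)" using g1ae[rule_format, where a=0 and c="-1"] by simp
        then show ?thesis by eventually_elim simp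
      qed
    qed
    finally show ?thesis .
  qed

  define TM where "TM = (\<lambda>M x. \<integral>s. indicator {..M} s *\<^sub>R (f1 (x - s) * \<phi>0 s) \<partial>lborel)"
  define BM where "BM = (\<lambda>M. \<integral>s. indicator {..M} s *\<^sub>R (g1 (- s) * \<phi>0 s) \<partial>lborel)"
  have C: "((\<lambda>x. TM M x) \<longlongrightarrow> BM M) F" if M: "0 < M" for M
  proof -
    from gE[rule_format, OF M] obtain h where hh: "is_f_omega_plus f (tau (- M) \<omega>) h \<and>
        (AE x in lborel. x \<in> {- M..0} \<longrightarrow> g x = h (M + x))" ..
    have hf: "is_f_omega_plus f (tau (- M) \<omega>) h" using hh by (rule conjunct1)
    have hg: "AE x in lborel. x \<in> {- M..0} \<longrightarrow> g x = h (M + x)" using hh by (rule conjunct2)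
    have hL: "Linf_plus h" using hf unfolding is_f_omega_plus_def by (rule conjunct1)
    have hconv: "\<forall>\<psi>. L1_plus \<psi> \<longrightarrow>
        ((\<lambda>s. LINT t:{0..}|lborel. f (t + s) * \<psi> t) \<longlongrightarrow> (LINT t:{0..}|lborel. h t * \<psi> t))
          (omega_filter (tau (- M) \<omega>))"
      using hf unfolding is_f_omega_plus_def by (rule conjunct2)
    define h0 where "h0 = (\<lambda>t. indicator {0..} t *\<^sub>R h t)"
    have h0m[measurable]: "h0 \<in> borel_measurable borel"
      using hL unfolding Linf_plus_def set_borel_measurable_def h0_def by simp
    define \<psi> where "\<psi> = (\<lambda>t. \<phi>0 (M - t))"
    have \<psi>L: "L1_plus \<psi>"
    proof -
      have "integrable lborel (\<lambda>t. \<phi>0 (M + -1 * t))"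
        using lborel_integrable_real_affine[OF \<phi>i, of "-1" M] by simp
      then have "integrable lborel \<psi>" unfolding \<psi>_def by simp
      then show ?thesis unfolding L1_plus_def set_integrable_def by (intro integrable_mult_indicator) auto
    qed
    have lim1: "((\<lambda>s. LINT t:{0..}|lborel. f (t + s) * \<psi> t) \<longlongrightarrow> (LINT t:{0..}|lborel. h t * \<psi> t))
          (omega_filter (tau (- M) \<omega>))" using hconv \<psi>L by blast
    have lim2: "((\<lambda>x. LINT t:{0..}|lborel. f (t + (x - M)) * \<psi> t) \<longlongrightarrow> (LINT t:{0..}|lborel. h t * \<psi> t)) F"
      using filterlim_compose[OF lim1 Omega_star_shift[OF assms(3), of M]] unfolding F_def by simp
    have ev: "eventually (\<lambda>x. (LINT t:{0..}|lborel. f (t + (x - M)) * \<psi> t) = TM M x) F"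
      using Omega_star_ev_ge[OF assms(3), of M] unfolding F_def
    proof eventually_elim
      case (elim x)
      have "(LINT t:{0..}|lborel. f (t + (x - M)) * \<psi> t)
          = (\<integral>t. indicator {0..} t *\<^sub>R (f0 ((x - M) + 1 * t) * \<phi>0 (M - t)) \<partial>lborel)"
        unfolding set_lebesgue_integral_def \<psi>_def f0_def using elim
        by (intro Bochner_Integration.integral_cong[OF refl]) (auto simp: indicator_def add.commute)
      also have "\<dots> = (\<integral>t. indicator {0..} t *\<^sub>R (f1 ((x - M) + 1 * t) * \<phi>0 (M - t)) \<partial>lborel)"
      proof (rule integral_cong_AE)
        show "(\<lambda>t. indicator {0..} t *\<^sub>R (f0 ((x - M) + 1 * t) * \<phi>0 (M - t))) \<in> borel_measurable lborel"
          by measurable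
        show "(\<lambda>t. indicator {0..} t *\<^sub>R (f1 ((x - M) + 1 * t) * \<phi>0 (M - t))) \<in> borel_measurable lborel"
          by measurable
        show "AE t in lborel. indicator {0..} t *\<^sub>R (f0 ((x - M) + 1 * t) * \<phi>0 (M - t))
            = indicator {0..} t *\<^sub>R (f1 ((x - M) + 1 * t) * \<phi>0 (M - t))"
        proof -
          have "AE t in lborel. f0 ((x - M) + 1 * t) = f1 ((x - M) + 1 * t)"
            using f1ae[rule_format, where a="x - M" and c=1] by simp
          then show ?thesis by eventually_elim simp
        qed
      qed
      also have "\<dots> = (\<integral>s. indicator {0..} (M + -1 * s) *\<^sub>R (f1 ((x - M) + 1 * (M + -1 * s)) * \<phi>0 (M - (M + -1 * s))) \<partial>lborel)"
        using lborel_integral_real_affine[where c="-1" and t=M and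
            f="\<lambda>t. indicator {0..} t *\<^sub>R (f1 ((x - M) + 1 * t) * \<phi>0 (M - t))"] by simp
      also have "\<dots> = TM M x" unfolding TM_def
        by (intro Bochner_Integration.integral_cong[OF refl]) (auto simp: indicator_def)
      finally show ?case .
    qed
    have hv: "(LINT t:{0..}|lborel. h t * \<psi> t) = BM M"
    proof -
      have "(LINT t:{0..}|lborel. h t * \<psi> t) = (\<integral>t. h0 t * \<phi>0 (M - t) \<partial>lborel)"
        unfolding set_lebesgue_integral_def \<psi>_def h0_def
        by (intro Bochner_Integration.integral_cong[OF refl]) (auto simp: indicator_def)
      also have "\<dots> = (\<integral>s. h0 (M + -1 * s) * \<phi>0 (M - (M + -1 * s)) \<partial>lborel)"
        using lborel_integral_real_affine[where c="-1" and t=M and f="\<lambda>t. h0 t * \<phi>0 (M - t)"] by simp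
      also have "\<dots> = BM M" unfolding BM_def
      proof (rule integral_cong_AE)
        show "(\<lambda>s. h0 (M + -1 * s) * \<phi>0 (M - (M + -1 * s))) \<in> borel_measurable lborel" by measurable
        show "(\<lambda>s. indicator {..M} s *\<^sub>R (g1 (- s) * \<phi>0 s)) \<in> borel_measurable lborel" by measurable
        have "AE x in lborel. x \<in> {- M..0} \<longrightarrow> g x = h0 (M + x)"
          using hg by eventually_elim (auto simp: h0_def)
        moreover have "Measurable.pred borel (\<lambda>x. x \<in> {- M..0} \<longrightarrow> g x = h0 (M + x))" by measurable
        ultimately have a1: "AE s in lborel. (0 + -1 * s) \<in> {- M..0} \<longrightarrow> g (0 + -1 * s) = h0 (M + (0 + -1 * s))"
          using AE_borel_affine[of "-1" "\<lambda>x. x \<in> {- M..0} \<longrightarrow> g x = h0 (M + x)" 0] by simp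
        show "AE s in lborel. h0 (M + -1 * s) * \<phi>0 (M - (M + -1 * s)) = indicator {..M} s *\<^sub>R (g1 (- s) * \<phi>0 s)"
          using a1 g1ae[rule_format, where a=0 and c="-1", OF neg_one_neq_zero]
        proof eventually_elim
          case (elim s)
          show ?case
          proof (cases "s < 0")
            case True then show ?thesis by (simp add: \<phi>0_def)
          next
            case False
            show ?thesis
            proof (cases "s \<le> M")
              case True
              with False elim show ?thesis by simp
            next
              case False2: False
              then show ?thesis by (simp add: h0_def)
            qed
          qed
        qed
      qed
      finally show ?thesis .
    qed
    show ?thesis using tendsto_cong[OF ev] lim2 hv by simp
  qed

  have T: "(Conv \<longlongrightarrow> Bv) F"
  proof (rule tendstoI)
    fix e :: real assume e: "0 < e"
    have "0 < e / (2 * (Cf + Cg + 1))" using e Cf0 Cg0 by simp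
    from tl_small[OF \<phi>i this] obtain M where M: "0 < M" "tl \<phi>0 M < e / (2 * (Cf + Cg + 1))" by auto
    have t1: "norm (Conv x - TM M x) \<le> Cf * tl \<phi>0 M" for x
    proof -
      have "(\<lambda>s. f1 (x - s)) \<in> borel_measurable borel" by measurable
      from tail_bound[OF this _ \<phi>i, of Cf M] f1b show ?thesis unfolding Conv_def TM_def by blast
    qed
    have t2: "norm (Bv - BM M) \<le> Cg * tl \<phi>0 M"
    proof -
      have "(\<lambda>s. g1 (- s)) \<in> borel_measurable borel" by measurable
      from tail_bound[OF this _ \<phi>i, of Cg M] g1b show ?thesis unfolding Bv_def BM_def by blast
    qed
    have tl0: "0 \<le> tl \<phi>0 M" by (rule tl_nonneg)
    have "(Cf + Cg + 1) * tl \<phi>0 M < (Cf + Cg + 1) * (e / (2 * (Cf + Cg + 1)))"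
      using M(2) Cf0 Cg0 by (intro mult_strict_left_mono) auto
    also have "\<dots> = e / 2" using Cf0 Cg0 by (simp add: field_simps)
    finally have small: "Cf * tl \<phi>0 M + Cg * tl \<phi>0 M < e / 2" using tl0 by (simp add: algebra_simps)
    have "eventually (\<lambda>x. dist (TM M x) (BM M) < e / 2) F"
      using tendstoD[OF C[OF M(1)], of "e / 2"] e by simp
    then show "eventually (\<lambda>x. dist (Conv x) Bv < e) F"
    proof eventually_elim
      case (elim x)
      have "dist (Conv x) Bv \<le> dist (Conv x) (TM M x) + dist (TM M x) Bv" by (rule dist_triangle)
      also have "dist (TM M x) Bv \<le> dist (TM M x) (BM M) + dist (BM M) Bv" by (rule dist_triangle)
      finally have "dist (Conv x) Bv \<le> norm (Conv x - TM M x) + dist (TM M x) (BM M) + norm (Bv - BM M)"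
        by (simp add: dist_norm norm_minus_commute)
      then show ?case using t1[of x] t2 elim small by linarith
    qed
  qed
  have eqf: "(\<lambda>x. LINT t:{0..x}|lborel. f t * \<phi> (x - t)) = Conv" using A by auto
  have nt: "\<not> trivial_limit F" using Omega_star_notbot[OF assms(3)] unfolding F_def trivial_limit_def by simp
  show ?thesis unfolding omega_lim_def eqf B F_def[symmetric] using tendsto_Lim[OF nt T] .
qed

end
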